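(* Let $H:\mathbb R_+\to(0,1)$ be continuous with constants $0<h_1<h_2<1$ such that $h_1\le H_t\le h_2$ for all $t\ge0$, and let $Y$ be the multifractional Brownian motion with Hurst function $H$. Then there exists a constant $K_2>0$ such that for all $t\ge s\ge0$, \[ \mathbb E(Y(t)-Y(s))^2\le K_2|t-s|^{2H_t}+K_2(H_t-H_s)^2z^2(s), \] where $z(s)=s^{h_2}(\log^2s+1)^{1/2}$ for $s\ge1$ and $z(s)=1$ for $0\le s<1$.
   Context: The (harmonizable) multifractional Brownian motion with continuous functional parameter $H$ is $Y(t)=\int_{\mathbb R}\frac{e^{itu}-1}{|u|^{H_t+1/2}}\widetilde W(du)$, $t\ge0$, where $\widetilde W$ is the Fourier transform of real Gaussian white noise $W$ (the unique complex-valued random measure with $\int f\,dW=\int\widehat f\,d\widetilde W$ a.s. for all $f\in L^2(\mathbb R)$). *)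

theory Defs
  imports "HOL-Probability.Probability"
begin

text \<open>Integrand of the harmonizable representation of multifractional Brownian motion:
  Y(t) = \<integral> (e^{itu}-1)/|u|^{H_t+1/2} dW~(u).\<close>
definition mbm_kernel :: "(real \<Rightarrow> real) \<Rightarrow> real \<Rightarrow> real \<Rightarrow> complex" where
  "mbm_kernel H t u = (cis (t * u) - 1) / complex_of_real (\<bar>u\<bar> powr (H t + 1/2))"

definition zfun :: "real \<Rightarrow> real \<Rightarrow> real" where
  "zfun h2 s = (if s \<ge> 1 then s powr h2 * sqrt ((ln s)\<^sup>2 + 1) else 1)"

text \<open>Y is (a version of) the harmonizable mBm with Hurst function H on the
  probability space M: the isometry of the Fourier transform of white noise
  gives E (Y t - Y s)^2 = c * \<integral> |k_t(u) - k_s(u)|^2 du, where c > 0 is the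
  normalising constant of the Fourier-transform convention.\<close>
definition is_harmonizable_mbm ::
  "'a measure \<Rightarrow> (real \<Rightarrow> 'a \<Rightarrow> real) \<Rightarrow> (real \<Rightarrow> real) \<Rightarrow> real \<Rightarrow> bool" where
  "is_harmonizable_mbm M Y H c \<longleftrightarrow>
     prob_space M \<and> c > 0 \<and>
     (\<forall>t\<ge>0. Y t \<in> borel_measurable M) \<and>
     (\<forall>t\<ge>0. \<forall>s\<ge>0. integrable M (\<lambda>\<omega>. (Y t \<omega> - Y s \<omega>)\<^sup>2) \<and>
        (\<integral>\<omega>. (Y t \<omega> - Y s \<omega>)\<^sup>2 \<partial>M) =
          c * (\<integral>u. (cmod (mbm_kernel H t u - mbm_kernel H s u))\<^sup>2 \<partial>lborel))"

end

theory Submission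
  imports Defs
begin


lemma cis_diff1: "cmod (cis x - 1) \<le> \<bar>x\<bar>"
  using iexp_approx1[of x 0] by (simp add: cis_conv_exp mult.commute)

lemma cis_diff2: "cmod (cis x - 1) \<le> 2"
  by (metis norm_cis norm_one norm_triangle_ineq4 one_add_one)

lemma pw0:
  fixes p a c :: real
  assumes "p > -1" "a \<ge> 0"
  shows "((\<lambda>x. if x \<in> {0..a} then c * x powr p else 0) has_integral (c * (a powr (p+1)/(p+1)))) UNIV"
proof -
  have "((\<lambda>x. c * x powr p) has_integral (c * (a powr (p+1)/(p+1)))) {0..a}"
    using has_integral_powr_from_0[OF assms] by (rule has_integral_mult_right)
  then show ?thesis unfolding has_integral_restrict_UNIV .
qed

lemma pwinf:
  fixes q a c :: real
  assumes "q < -1" "a > 0"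
  shows "((\<lambda>x. if x \<in> {a..} then c * x powr q else 0) has_integral (c * (-(a powr (q+1))/(q+1)))) UNIV"
proof -
  have "((\<lambda>x. c * x powr q) has_integral (c * (-(a powr (q+1))/(q+1)))) {a..}"
    using has_integral_powr_to_inf[OF assms] by (rule has_integral_mult_right)
  then show ?thesis unfolding has_integral_restrict_UNIV .
qed

lemma meas_pw0: "(\<lambda>x::real. if x \<in> {0..a} then c * x powr p else 0) \<in> borel_measurable borel"
  by measurable
lemma meas_pwinf: "(\<lambda>x::real. if x \<in> {a..} then c * x powr p else 0) \<in> borel_measurable borel"
  by measurable

lemma ln_le_powr: fixes x e :: real assumes "x > 0" "e > 0" shows "ln x \<le> x powr e / e"
proof -
  have "ln (x powr e) \<le> x powr e - 1" using ln_le_minus_one[of "x powr e"] assms by simp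
  then have "e * ln x \<le> x powr e" using assms by (simp add: ln_powr)
  then show ?thesis using assms by (simp add: field_simps)
qed



lemma powr_sq: "r > 0 \<Longrightarrow> (r powr x)\<^sup>2 = r powr (2*x)" for r x :: real
  by (simp add: power2_eq_square powr_add[symmetric])

lemma sq_powr: "r > 0 \<Longrightarrow> r\<^sup>2 * r powr x = r powr (x+2)" for r x :: real
  by (simp add: powr_add powr_numeral)

lemma inv_powr: "d > 0 \<Longrightarrow> (1/d) powr y = d powr (-y)" for d y :: real
  by (simp add: powr_divide powr_minus_divide)

definition G1 :: "real \<Rightarrow> real \<Rightarrow> real \<Rightarrow> real" where
  "G1 d A r = (if r \<in> {0..1/d} then d\<^sup>2 * r powr (1-2*A) else 0) +
              (if r \<in> {1/d..} then 4 * r powr (-2*A-1) else 0)"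

lemma G1_nonneg: "d > 0 \<Longrightarrow> G1 d A r \<ge> 0"
  by (auto simp: G1_def)

lemma G1_bound:
  fixes d A r X :: real
  assumes "d > 0" "r > 0" "0 \<le> X" "X \<le> min (d*r) 2 * r powr (-(A+1/2))"
  shows "X\<^sup>2 \<le> G1 d A r"
proof -
  have "X\<^sup>2 \<le> (min (d*r) 2 * r powr (-(A+1/2)))\<^sup>2"
    using assms by (intro power_mono) auto
  also have "\<dots> = (min (d*r) 2)\<^sup>2 * r powr (-2*A-1)"
    using assms by (simp add: power_mult_distrib powr_sq algebra_simps)
  finally have X: "X\<^sup>2 \<le> (min (d*r) 2)\<^sup>2 * r powr (-2*A-1)" .
  show ?thesis
  proof (cases "r \<le> 1/d")
    case True
    have "(min (d*r) 2)\<^sup>2 \<le> (d*r)\<^sup>2" using assms by (intro power_mono) auto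
    then have "X\<^sup>2 \<le> (d*r)\<^sup>2 * r powr (-2*A-1)"
      using X by (meson mult_right_mono order_trans powr_ge_zero)
    also have "\<dots> = d\<^sup>2 * (r\<^sup>2 * r powr (-2*A-1))" by (simp add: power_mult_distrib)
    also have "\<dots> = d\<^sup>2 * r powr (1-2*A)" using assms by (simp add: sq_powr)
    moreover have "0 \<le> (if r \<in> {1/d..} then 4 * r powr (-2*A-1) else 0)" by auto
    ultimately show ?thesis using True assms unfolding G1_def by auto
  next
    case False
    have "(min (d*r) 2)\<^sup>2 \<le> 2\<^sup>2" using assms by (intro power_mono) auto
    then have "X\<^sup>2 \<le> 4 * r powr (-2*A-1)"
      using X mult_right_mono[OF \<open>(min (d*r) 2)\<^sup>2 \<le> 2\<^sup>2\<close> powr_ge_zero[of r "-2*A-1"]] by simp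
    then show ?thesis using False assms unfolding G1_def by auto
  qed
qed

lemma G1_integral:
  fixes d A :: real
  assumes "d > 0" "0 < A" "A < 1"
  shows "(G1 d A has_integral (d powr (2*A) * (1/(2-2*A) + 2/A))) UNIV"
proof -
  have i1: "((\<lambda>x. if x \<in> {0..1/d} then d\<^sup>2 * x powr (1-2*A) else 0) has_integral
      (d\<^sup>2 * ((1/d) powr (1-2*A+1)/(1-2*A+1)))) UNIV"
    using assms by (intro pw0) auto
  have i2: "((\<lambda>x. if x \<in> {1/d..} then 4 * x powr (-2*A-1) else 0) has_integral
      (4 * (-((1/d) powr (-2*A-1+1))/(-2*A-1+1)))) UNIV"
    using assms by (intro pwinf) auto
  have e1: "d\<^sup>2 * ((1/d) powr (1-2*A+1)/(1-2*A+1)) = d powr (2*A) / (2-2*A)"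
  proof -
    have "d\<^sup>2 * (1/d) powr (2-2*A) = d powr 2 * d powr (-(2-2*A))"
      using assms by (simp add: inv_powr powr_numeral)
    also have "\<dots> = d powr (2*A)" by (simp add: powr_add[symmetric])
    finally show ?thesis by (simp add: algebra_simps)
  qed
  have e2: "4 * (-((1/d) powr (-2*A-1+1))/(-2*A-1+1)) = d powr (2*A) * (2/A)"
  proof -
    have "(1/d) powr (-2*A-1+1) = d powr (2*A)" using assms by (simp add: inv_powr)
    then show ?thesis using assms by simp
  qed
  have "(G1 d A has_integral (d\<^sup>2 * ((1/d) powr (1-2*A+1)/(1-2*A+1)) +
          4 * (-((1/d) powr (-2*A-1+1))/(-2*A-1+1)))) UNIV"
    unfolding G1_def using has_integral_add[OF i1 i2] by simp
  moreover have "d\<^sup>2 * ((1/d) powr (1-2*A+1)/(1-2*A+1)) +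
          4 * (-((1/d) powr (-2*A-1+1))/(-2*A-1+1)) = d powr (2*A)/(2-2*A) + d powr (2*A) * (2/A)"
    by (simp only: e1 e2)
  moreover have "d powr (2*A)/(2-2*A) + d powr (2*A) * (2/A) = d powr (2*A) * (1/(2-2*A) + 2/A)"
    by (simp add: algebra_simps)
  ultimately show ?thesis by simp
qed



definition G2 :: "real \<Rightarrow> real \<Rightarrow> real \<Rightarrow> real \<Rightarrow> real" where
  "G2 h1 h2 S r =
     (if r \<in> {0..1/S} then (2*S\<^sup>2*(ln S)\<^sup>2) * r powr (1-2*h2) else 0)
   + (if r \<in> {0..1/S} then (8 * S powr (1+h2) / (1-h2)\<^sup>2) * r powr (-h2) else 0)
   + (if r \<in> {1/S..} then (4*(ln S)\<^sup>2) * r powr (-2*h2-1) else 0)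
   + (if r \<in> {1..} then (16/h1\<^sup>2) * r powr (-h1-1) else 0)"

definition Mf :: "real \<Rightarrow> real \<Rightarrow> real \<Rightarrow> real" where
  "Mf h1 h2 r = (if r < 1 then r powr (-(h2+1/2)) else r powr (-(h1+1/2)))"

lemma sq_diff_le: "(a - b)\<^sup>2 \<le> 2 * a\<^sup>2 + 2 * b\<^sup>2" for a b :: real
proof -
  have "(a-b)\<^sup>2 + (a+b)\<^sup>2 = 2 * a\<^sup>2 + 2 * b\<^sup>2" by (simp add: power2_eq_square algebra_simps)
  moreover have "(a+b)\<^sup>2 \<ge> 0" by simp
  ultimately show ?thesis by linarith
qed

lemma G2_bound:
  fixes h1 h2 S r m :: real
  assumes h: "0 < h1" "h1 < h2" "h2 < 1" and S: "S \<ge> 1" and r: "r > 0"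
    and m: "0 \<le> m" "m \<le> S * r" "m \<le> 2"
  shows "m\<^sup>2 * (ln r)\<^sup>2 * (Mf h1 h2 r)\<^sup>2 \<le> G2 h1 h2 S r"
proof -
  define T1 where "T1 = (if r \<in> {0..1/S} then (2*S\<^sup>2*(ln S)\<^sup>2) * r powr (1-2*h2) else 0)"
  define T2 where "T2 = (if r \<in> {0..1/S} then (8 * S powr (1+h2) / (1-h2)\<^sup>2) * r powr (-h2) else 0)"
  define T3 where "T3 = (if r \<in> {1/S..} then (4*(ln S)\<^sup>2) * r powr (-2*h2-1) else 0)"
  define T4 where "T4 = (if r \<in> {1..} then (16/h1\<^sup>2) * r powr (-h1-1) else 0)"
  have G: "G2 h1 h2 S r = T1 + T2 + T3 + T4" unfolding G2_def T1_def T2_def T3_def T4_def by simp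
  have T1: "T1 \<ge> 0" and T2: "T2 \<ge> 0" and T3: "T3 \<ge> 0" and T4: "T4 \<ge> 0"
    unfolding T1_def T2_def T3_def T4_def using h S by auto
  have lnS: "ln S \<ge> 0" using S by simp
  have "m\<^sup>2 \<le> 2\<^sup>2" using m by (intro power_mono) auto
  then have m2: "m\<^sup>2 \<le> 4" by simp
  consider (i) "r < 1/S" | (ii) "1/S \<le> r" "r < 1" | (iii) "r \<ge> 1" by linarith
  then show ?thesis
  proof cases
    case i
    have "1/S \<le> 1" using S by simp
    then have r1: "r < 1" using i by linarith
    have Sr: "S * r < 1" "S * r > 0" using i S r by (auto simp: field_simps)
    have Mf: "(Mf h1 h2 r)\<^sup>2 = r powr (-2*h2-1)" using r1 r by (simp add: Mf_def powr_sq algebra_simps)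
    have mm: "m\<^sup>2 \<le> S\<^sup>2 * r\<^sup>2" using m by (metis power_mono power_mult_distrib)
    have lnr: "ln r = ln (S*r) - ln S" using S r by (simp add: ln_mult)
    have l1: "(ln r)\<^sup>2 \<le> 2 * (ln (S*r))\<^sup>2 + 2 * (ln S)\<^sup>2"
      unfolding lnr by (rule sq_diff_le)
    define e where "e = (1-h2)/2"
    have e: "e > 0" using h by (simp add: e_def)
    have "ln (1/(S*r)) \<le> (1/(S*r)) powr e / e" using Sr e by (intro ln_le_powr) auto
    then have "- ln (S*r) \<le> (S*r) powr (-e) / e" using Sr S r by (simp add: ln_div inv_powr)
    moreover have "- ln (S*r) \<ge> 0" using Sr by simp
    ultimately have "(ln (S*r))\<^sup>2 \<le> ((S*r) powr (-e) / e)\<^sup>2"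
      by (metis minus_diff_eq diff_0 power2_minus power_mono)
    also have "\<dots> = (S*r) powr (h2-1) * (4/(1-h2)\<^sup>2)"
    proof -
      have "((S*r) powr (-e) / e)\<^sup>2 = (S*r) powr (2*(-e)) / e\<^sup>2"
        using Sr by (simp add: power_divide powr_sq)
      also have "2*(-e) = h2 - 1" by (simp add: e_def field_simps)
      also have "e\<^sup>2 = (1-h2)\<^sup>2/4" by (simp add: e_def power_divide)
      finally show ?thesis by simp
    qed
    finally have l2: "(ln (S*r))\<^sup>2 \<le> (S*r) powr (h2-1) * (4/(1-h2)\<^sup>2)" .
    have "m\<^sup>2 * (ln r)\<^sup>2 * (Mf h1 h2 r)\<^sup>2 \<le> (S\<^sup>2 * r\<^sup>2) * (2 * ((S*r) powr (h2-1) * (4/(1-h2)\<^sup>2)) + 2 * (ln S)\<^sup>2) * r powr (-2*h2-1)"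
      unfolding Mf
      by (intro mult_mono mm l1[THEN order_trans] add_mono order_refl mult_left_mono l2) auto
    also have "\<dots> = (2*S\<^sup>2*(ln S)\<^sup>2) * (r\<^sup>2 * r powr (-2*h2-1))
        + (8/(1-h2)\<^sup>2) * (S\<^sup>2 * S powr (h2-1)) * (r\<^sup>2 * r powr (h2-1) * r powr (-2*h2-1))"
      using Sr S r by (simp add: powr_mult algebra_simps power_mult_distrib)
    also have "r\<^sup>2 * r powr (-2*h2-1) = r powr (1-2*h2)" using r by (simp add: sq_powr)
    also have "S\<^sup>2 * S powr (h2-1) = S powr (1+h2)" using S by (simp add: sq_powr)
    also have "r\<^sup>2 * r powr (h2-1) * r powr (-2*h2-1) = r powr (-h2)"
      using r by (simp add: sq_powr powr_add[symmetric])
    finally have "m\<^sup>2 * (ln r)\<^sup>2 * (Mf h1 h2 r)\<^sup>2 \<le> T1 + T2"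
      unfolding T1_def T2_def using i r by (simp add: algebra_simps)
    then show ?thesis using G T3 T4 by linarith
  next
    case ii
    have Mf: "(Mf h1 h2 r)\<^sup>2 = r powr (-2*h2-1)" using ii r by (simp add: Mf_def powr_sq algebra_simps)
    have "ln r \<ge> ln (1/S)" using ii r S by (subst ln_le_cancel_iff) auto
    then have "ln r \<ge> - ln S" using S by (simp add: ln_div)
    moreover have "ln r < 0" using ii r by simp
    ultimately have "(- ln r)\<^sup>2 \<le> (ln S)\<^sup>2" by (intro power_mono) auto
    then have l: "(ln r)\<^sup>2 \<le> (ln S)\<^sup>2" by simp
    have "m\<^sup>2 * (ln r)\<^sup>2 * (Mf h1 h2 r)\<^sup>2 \<le> 4 * (ln S)\<^sup>2 * r powr (-2*h2-1)"
      unfolding Mf by (intro mult_mono m2 l) auto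
    then have "m\<^sup>2 * (ln r)\<^sup>2 * (Mf h1 h2 r)\<^sup>2 \<le> T3" unfolding T3_def using ii by simp
    then show ?thesis using G T1 T2 T4 by linarith
  next
    case iii
    have Mf: "(Mf h1 h2 r)\<^sup>2 = r powr (-2*h1-1)" using iii r by (simp add: Mf_def powr_sq algebra_simps)
    have "ln r \<le> r powr (h1/2) / (h1/2)" using r h by (intro ln_le_powr) auto
    moreover have "ln r \<ge> 0" using iii by simp
    ultimately have "(ln r)\<^sup>2 \<le> (r powr (h1/2) / (h1/2))\<^sup>2" by (intro power_mono)
    also have "\<dots> = r powr h1 * (4/h1\<^sup>2)" using r h by (simp add: power_divide power2_eq_square powr_add[symmetric])
    finally have l: "(ln r)\<^sup>2 \<le> r powr h1 * (4/h1\<^sup>2)" .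
    have "m\<^sup>2 * (ln r)\<^sup>2 * (Mf h1 h2 r)\<^sup>2 \<le> 4 * (r powr h1 * (4/h1\<^sup>2)) * r powr (-2*h1-1)"
      unfolding Mf by (intro mult_mono m2 l) auto
    also have "\<dots> = (16/h1\<^sup>2) * (r powr h1 * r powr (-2*h1-1))" by simp
    also have "r powr h1 * r powr (-2*h1-1) = r powr (-h1-1)" by (simp add: powr_add[symmetric])
    finally have "m\<^sup>2 * (ln r)\<^sup>2 * (Mf h1 h2 r)\<^sup>2 \<le> T4" unfolding T4_def using iii by simp
    then show ?thesis using G T1 T2 T3 by linarith
  qed
qed



lemma exp_diff_le1: "x \<le> y \<Longrightarrow> exp y - exp x \<le> (y - x) * exp y" for x y :: real
proof -
  assume "x \<le> y"
  have "exp (x - y) \<ge> 1 + (x - y)" by (rule exp_ge_add_one_self)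
  then have "exp y * exp (x - y) \<ge> exp y * (1 + (x - y))" by (intro mult_left_mono) auto
  then show ?thesis by (simp add: exp_diff algebra_simps)
qed

lemma exp_diff_le: "\<bar>exp x - exp y\<bar> \<le> \<bar>x - y\<bar> * max (exp x) (exp y)" for x y :: real
proof (cases "x \<le> y")
  case True
  then show ?thesis using exp_diff_le1[OF True] by (auto simp: abs_if max_def)
next
  case False
  then have "y \<le> x" by simp
  then show ?thesis using exp_diff_le1[OF \<open>y \<le> x\<close>] False by (auto simp: abs_if max_def)
qed

lemma powr_diff_bound:
  fixes r A B h1 h2 :: real
  assumes r: "r > 0" and AB: "h1 \<le> A" "A \<le> h2" "h1 \<le> B" "B \<le> h2"
  shows "\<bar>r powr (-(A+1/2)) - r powr (-(B+1/2))\<bar> \<le> \<bar>A - B\<bar> * \<bar>ln r\<bar> * Mf h1 h2 r"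
proof -
  have M: "r powr (-(x+1/2)) \<le> Mf h1 h2 r" if "h1 \<le> x" "x \<le> h2" for x
  proof (cases "r < 1")
    case True
    then show ?thesis unfolding Mf_def using r that by (simp add: powr_mono')
  next
    case False
    then show ?thesis unfolding Mf_def using r that by (simp add: powr_mono)
  qed
  have "\<bar>r powr (-(A+1/2)) - r powr (-(B+1/2))\<bar>
      = \<bar>exp (-(A+1/2) * ln r) - exp (-(B+1/2) * ln r)\<bar>"
    using r by (simp add: powr_def mult.commute)
  also have "\<dots> \<le> \<bar>-(A+1/2) * ln r - -(B+1/2) * ln r\<bar> * max (exp (-(A+1/2) * ln r)) (exp (-(B+1/2) * ln r))"
    by (rule exp_diff_le)
  also have "max (exp (-(A+1/2) * ln r)) (exp (-(B+1/2) * ln r)) = max (r powr (-(A+1/2))) (r powr (-(B+1/2)))"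
    using r by (simp add: powr_def mult.commute)
  also have "\<bar>-(A+1/2) * ln r - -(B+1/2) * ln r\<bar> = \<bar>A - B\<bar> * \<bar>ln r\<bar>"
    by (simp add: abs_mult[symmetric] algebra_simps)
  also have "\<bar>A - B\<bar> * \<bar>ln r\<bar> * max (r powr (-(A+1/2))) (r powr (-(B+1/2))) \<le> \<bar>A - B\<bar> * \<bar>ln r\<bar> * Mf h1 h2 r"
    using M AB by (intro mult_left_mono) auto
  finally show ?thesis .
qed



definition C2 :: "real \<Rightarrow> real \<Rightarrow> real" where
  "C2 h1 h2 = 1/(1-h2) + 8/(1-h2)^3 + 2/h2 + 16/h1^3"

lemma G2_integral:
  fixes h1 h2 S :: real
  assumes h: "0 < h1" "h1 < h2" "h2 < 1" and S: "S \<ge> 1"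
  shows "\<exists>V. (G2 h1 h2 S has_integral V) UNIV \<and> V \<le> C2 h1 h2 * (S powr (2*h2) * ((ln S)\<^sup>2 + 1))"
proof -
  define P where "P = S powr (2*h2)"
  define L where "L = (ln S)\<^sup>2"
  have S0: "S > 0" using S by simp
  have P1: "P \<ge> 1" unfolding P_def using S h by (simp add: ge_one_powr_ge_zero)
  have L0: "L \<ge> 0" unfolding L_def by simp
  have i1: "((\<lambda>x. if x \<in> {0..1/S} then (2*S\<^sup>2*(ln S)\<^sup>2) * x powr (1-2*h2) else 0) has_integral
      ((2*S\<^sup>2*(ln S)\<^sup>2) * ((1/S) powr (1-2*h2+1)/(1-2*h2+1)))) UNIV"
    using h S by (intro pw0) auto
  have i2: "((\<lambda>x. if x \<in> {0..1/S} then (8 * S powr (1+h2) / (1-h2)\<^sup>2) * x powr (-h2) else 0) has_integral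
      ((8 * S powr (1+h2) / (1-h2)\<^sup>2) * ((1/S) powr (-h2+1)/(-h2+1)))) UNIV"
    using h S by (intro pw0) auto
  have i3: "((\<lambda>x. if x \<in> {1/S..} then (4*(ln S)\<^sup>2) * x powr (-2*h2-1) else 0) has_integral
      ((4*(ln S)\<^sup>2) * (-((1/S) powr (-2*h2-1+1))/(-2*h2-1+1)))) UNIV"
    using h S by (intro pwinf) auto
  have i4: "((\<lambda>x. if x \<in> {1..} then (16/h1\<^sup>2) * x powr (-h1-1) else 0) has_integral
      ((16/h1\<^sup>2) * (-((1::real) powr (-h1-1+1))/(-h1-1+1)))) UNIV"
    using h by (intro pwinf) auto
  have e1: "(2*S\<^sup>2*(ln S)\<^sup>2) * ((1/S) powr (1-2*h2+1)/(1-2*h2+1)) = L * P / (1-h2)"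
  proof -
    have "S\<^sup>2 * (1/S) powr (1-2*h2+1) = S powr 2 * S powr (2*h2-2)"
      using S0 by (simp add: inv_powr powr_numeral)
    also have "\<dots> = P" unfolding P_def by (simp add: powr_add[symmetric])
    finally have "S\<^sup>2 * (1/S) powr (1-2*h2+1) = P" .
    have "(2*S\<^sup>2*(ln S)\<^sup>2) * ((1/S) powr (1-2*h2+1)/(1-2*h2+1))
        = 2*L*(S\<^sup>2 * (1/S) powr (1-2*h2+1)) / (1-2*h2+1)"
      unfolding L_def by (simp add: algebra_simps)
    also have "\<dots> = 2*L*P / (2*(1-h2))" using \<open>S\<^sup>2 * (1/S) powr (1-2*h2+1) = P\<close> by simp
    also have "\<dots> = L*P/(1-h2)" by (simp only: mult_divide_mult_cancel_left_if mult.assoc) simp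
    finally show ?thesis .
  qed
  have e2: "(8 * S powr (1+h2) / (1-h2)\<^sup>2) * ((1/S) powr (-h2+1)/(-h2+1)) = 8 * P / (1-h2)^3"
  proof -
    have "S powr (1+h2) * (1/S) powr (-h2+1) = P"
      using S0 unfolding P_def by (simp add: inv_powr powr_add[symmetric])
    then show ?thesis using h by (simp add: field_simps power2_eq_square power3_eq_cube)
  qed
  have e3: "(4*(ln S)\<^sup>2) * (-((1/S) powr (-2*h2-1+1))/(-2*h2-1+1)) = 2 * L * P / h2"
  proof -
    have "(1/S) powr (-2*h2-1+1) = P" using S0 unfolding P_def by (simp add: inv_powr)
    then show ?thesis using h unfolding L_def by (simp add: field_simps)
  qed
  have e4: "(16/h1\<^sup>2) * (-((1::real) powr (-h1-1+1))/(-h1-1+1)) = 16 / h1^3"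
    using h by (simp add: field_simps power2_eq_square power3_eq_cube)
  have I: "(G2 h1 h2 S has_integral (L * P / (1-h2) + 8 * P / (1-h2)^3 + 2 * L * P / h2 + 16 / h1^3)) UNIV"
    using has_integral_add[OF has_integral_add[OF has_integral_add[OF i1 i2] i3] i4]
    unfolding G2_def e1 e2 e3 e4 by simp
  have "1 * 1 \<le> P * (L + 1)" using P1 L0 by (intro mult_mono) auto
  then have PL: "P * (L + 1) \<ge> 1" by simp
  have b1: "L * P / (1-h2) \<le> P * (L+1) / (1-h2)" using h P1 by (intro divide_right_mono) (auto simp: algebra_simps)
  have b2: "8 * P / (1-h2)^3 \<le> 8 * (P * (L+1)) / (1-h2)^3" using h P1 L0
    by (intro divide_right_mono mult_left_mono) (auto simp: algebra_simps)
  have b3: "2 * L * P / h2 \<le> 2 * (P * (L+1)) / h2" using h P1 by (intro divide_right_mono) (auto simp: algebra_simps)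
  have b4: "16 / h1^3 \<le> 16 * (P * (L+1)) / h1^3" using h PL by (intro divide_right_mono) auto
  have "C2 h1 h2 * (P * (L+1)) = P * (L+1) / (1-h2) + 8 * (P * (L+1)) / (1-h2)^3 + 2 * (P * (L+1)) / h2 + 16 * (P * (L+1)) / h1^3"
    unfolding C2_def by (simp add: algebra_simps add_divide_distrib)
  then have "L * P / (1-h2) + 8 * P / (1-h2)^3 + 2 * L * P / h2 + 16 / h1^3 \<le> C2 h1 h2 * (P * (L+1))"
    using b1 b2 b3 b4 by linarith
  then show ?thesis using I unfolding P_def L_def by blast
qed



lemma G2_nonneg: "0 < h1 \<Longrightarrow> h2 < 1 \<Longrightarrow> S \<ge> 1 \<Longrightarrow> G2 h1 h2 S r \<ge> 0"
  by (auto simp: G2_def)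

lemma sq_sum_le: "(a + b)\<^sup>2 \<le> 2 * a\<^sup>2 + 2 * b\<^sup>2" for a b :: real
  using sq_diff_le[of a "-b"] by simp

lemma kernel_pw:
  fixes H :: "real \<Rightarrow> real" and h1 h2 s t u S :: real
  assumes h: "0 < h1" "h1 < h2" "h2 < 1"
    and A: "h1 \<le> H t" "H t \<le> h2" and B: "h1 \<le> H s" "H s \<le> h2"
    and st: "0 \<le> s" "s < t" and S: "S = max s 1"
  shows "(cmod (mbm_kernel H t u - mbm_kernel H s u))\<^sup>2
           \<le> 2 * G1 (t-s) (H t) \<bar>u\<bar> + 2 * (H t - H s)\<^sup>2 * G2 h1 h2 S \<bar>u\<bar>"
proof (cases "u = 0")
  case True
  have "0 \<le> G1 (t-s) (H t) \<bar>u\<bar>" using st by (intro G1_nonneg) auto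
  moreover have "0 \<le> G2 h1 h2 S \<bar>u\<bar>" using h S by (intro G2_nonneg) auto
  ultimately show ?thesis using True by (simp add: mbm_kernel_def)
next
  case False
  define r where "r = \<bar>u\<bar>"
  have r: "r > 0" using False by (simp add: r_def)
  define Pa where "Pa = r powr (-(H t + 1/2))"
  define Pb where "Pb = r powr (-(H s + 1/2))"
  have Pa': "Pa = inverse (r powr (H t + 1/2))" unfolding Pa_def by (rule powr_minus)
  have Pb': "Pb = inverse (r powr (H s + 1/2))" unfolding Pb_def by (rule powr_minus)
  have kt: "mbm_kernel H t u = (cis (t*u) - 1) * complex_of_real Pa"
    unfolding mbm_kernel_def Pa' r_def by (simp only: divide_inverse of_real_inverse)
  have ks: "mbm_kernel H s u = (cis (s*u) - 1) * complex_of_real Pb"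
    unfolding mbm_kernel_def Pb' r_def by (simp only: divide_inverse of_real_inverse)
  have ct: "cis (t*u) = cis (s*u) * cis ((t-s)*u)" by (simp add: cis_mult algebra_simps)
  have eq: "mbm_kernel H t u - mbm_kernel H s u
      = cis (s*u) * ((cis ((t-s)*u) - 1) * complex_of_real Pa) + (cis (s*u) - 1) * complex_of_real (Pa - Pb)"
    unfolding kt ks ct by (simp add: algebra_simps)
  define X where "X = cmod (cis ((t-s)*u) - 1) * Pa"
  define m where "m = cmod (cis (s*u) - 1)"
  define Y where "Y = m * \<bar>Pa - Pb\<bar>"
  have X0: "X \<ge> 0" and Y0: "Y \<ge> 0" unfolding X_def Y_def m_def Pa_def by auto
  have nrm: "cmod (mbm_kernel H t u - mbm_kernel H s u) \<le> X + Y"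
  proof -
    have Pa0: "Pa \<ge> 0" by (simp add: Pa_def)
    have "cmod (complex_of_real Pa - complex_of_real Pb) = \<bar>Pa - Pb\<bar>"
      by (metis norm_of_real of_real_diff)
    then show ?thesis unfolding eq X_def Y_def m_def
      by (intro order_trans[OF norm_triangle_ineq]) (simp add: norm_mult Pa0)
  qed
  have "cmod (cis ((t-s)*u) - 1) \<le> min ((t-s)*r) 2"
    using cis_diff1[of "(t-s)*u"] cis_diff2[of "(t-s)*u"] st unfolding r_def by (simp add: abs_mult)
  then have "X \<le> min ((t-s)*r) 2 * r powr (-(H t + 1/2))"
    unfolding X_def Pa_def by (intro mult_right_mono) auto
  then have X2: "X\<^sup>2 \<le> G1 (t-s) (H t) r" using st r X0 by (intro G1_bound) auto
  have m0: "0 \<le> m" unfolding m_def by simp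
  have mS: "m \<le> S * r"
  proof -
    have "m \<le> \<bar>s*u\<bar>" unfolding m_def by (rule cis_diff1)
    also have "\<dots> = s * r" using st by (simp add: abs_mult r_def)
    also have "\<dots> \<le> S * r" using S r by (intro mult_right_mono) auto
    finally show ?thesis .
  qed
  have m2: "m \<le> 2" unfolding m_def by (rule cis_diff2)
  have "\<bar>Pa - Pb\<bar> \<le> \<bar>H t - H s\<bar> * \<bar>ln r\<bar> * Mf h1 h2 r"
    unfolding Pa_def Pb_def using r A B by (intro powr_diff_bound) auto
  then have "Y \<le> m * (\<bar>H t - H s\<bar> * \<bar>ln r\<bar> * Mf h1 h2 r)" unfolding Y_def using m0 by (intro mult_left_mono) auto
  then have "Y\<^sup>2 \<le> (m * (\<bar>H t - H s\<bar> * \<bar>ln r\<bar> * Mf h1 h2 r))\<^sup>2" using Y0 by (intro power_mono) auto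
  also have "\<dots> = (H t - H s)\<^sup>2 * (m\<^sup>2 * (ln r)\<^sup>2 * (Mf h1 h2 r)\<^sup>2)"
    by (simp add: power_mult_distrib)
  also have "\<dots> \<le> (H t - H s)\<^sup>2 * G2 h1 h2 S r"
    using G2_bound[OF h _ r m0 mS m2] S by (intro mult_left_mono) auto
  finally have Y2: "Y\<^sup>2 \<le> (H t - H s)\<^sup>2 * G2 h1 h2 S r" .
  have "(cmod (mbm_kernel H t u - mbm_kernel H s u))\<^sup>2 \<le> (X + Y)\<^sup>2"
    using nrm by (intro power_mono) auto
  also have "\<dots> \<le> 2 * X\<^sup>2 + 2 * Y\<^sup>2" by (rule sq_sum_le)
  finally show ?thesis using X2 Y2 unfolding r_def by linarith
qed



lemma G1_meas: "G1 d A \<in> borel_measurable borel"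
  unfolding G1_def by measurable
lemma G2_meas: "G2 h1 h2 S \<in> borel_measurable borel"
  unfolding G2_def by measurable

lemma zfun_sq: "(zfun h2 s)\<^sup>2 = (max s 1) powr (2*h2) * ((ln (max s 1))\<^sup>2 + 1)"
proof (cases "s \<ge> 1")
  case True
  then have "max s 1 = s" by simp
  moreover have "(s powr h2)\<^sup>2 = s powr (2*h2)" using True by (intro powr_sq) auto
  ultimately show ?thesis using True by (simp add: zfun_def power_mult_distrib)
next
  case False
  then show ?thesis by (simp add: zfun_def max_def)
qed

lemma kernel_int:
  fixes H :: "real \<Rightarrow> real" and h1 h2 s t S :: real
  assumes h: "0 < h1" "h1 < h2" "h2 < 1"
    and A: "h1 \<le> H t" "H t \<le> h2" and B: "h1 \<le> H s" "H s \<le> h2"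
    and st: "0 \<le> s" "s < t" and S: "S = max s 1"
  shows "(\<integral>u. (cmod (mbm_kernel H t u - mbm_kernel H s u))\<^sup>2 \<partial>lborel)
     \<le> 4 * ((t-s) powr (2 * H t) * (1/(2-2*h2) + 2/h1))
       + 4 * (H t - H s)\<^sup>2 * (C2 h1 h2 * (S powr (2*h2) * ((ln S)\<^sup>2 + 1)))"
proof -
  define d where "d = t - s"
  have d: "d > 0" using st by (simp add: d_def)
  have S1: "S \<ge> 1" using S by simp
  obtain V where V: "(G2 h1 h2 S has_integral V) UNIV"
    and Vb: "V \<le> C2 h1 h2 * (S powr (2*h2) * ((ln S)\<^sup>2 + 1))"
    using G2_integral[OF h S1] by blast
  have I1: "(G1 d (H t) has_integral (d powr (2 * H t) * (1/(2-2*H t) + 2/H t))) UNIV"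
    using d A h by (intro G1_integral) auto
  define g where "g x = 2 * G1 d (H t) x + 2 * (H t - H s)\<^sup>2 * G2 h1 h2 S x" for x
  define W where "W = 2 * (d powr (2 * H t) * (1/(2-2*H t) + 2/H t)) + 2 * (H t - H s)\<^sup>2 * V"
  have gI: "(g has_integral W) UNIV"
    unfolding g_def W_def
    by (intro has_integral_add has_integral_mult_right I1 V)
  have g0: "g x \<ge> 0" for x
    unfolding g_def using G1_nonneg[OF d] G2_nonneg[OF h(1) h(3) S1] by (intro add_nonneg_nonneg mult_nonneg_nonneg) auto
  have gm[measurable]: "g \<in> borel_measurable borel"
    unfolding g_def using G1_meas G2_meas by measurable
  have W0: "W \<ge> 0" using has_integral_nonneg[OF gI] g0 by auto
  have nn: "(\<integral>\<^sup>+x. ennreal (g x) \<partial>lborel) = ennreal W"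
    using nn_integral_has_integral_lborel[OF gm g0 gI] .
  have nn': "(\<integral>\<^sup>+x. ennreal (g (-x)) \<partial>lborel) = ennreal W"
    using nn_integral_real_affine[of "\<lambda>x. ennreal (g x)" "-1" 0] nn by simp
  have pw: "ennreal ((cmod (mbm_kernel H t u - mbm_kernel H s u))\<^sup>2) \<le> ennreal (g u) + ennreal (g (-u))" for u
  proof -
    have "(cmod (mbm_kernel H t u - mbm_kernel H s u))\<^sup>2 \<le> g \<bar>u\<bar>"
      unfolding g_def d_def using kernel_pw[OF h A B st S] .
    also have "g \<bar>u\<bar> \<le> g u + g (-u)" using g0[of u] g0[of "-u"] by (cases "u \<ge> 0") auto
    finally show ?thesis using g0 by (simp add: ennreal_plus[symmetric] del: ennreal_plus)
  qed
  have "(\<integral>\<^sup>+u. ennreal ((cmod (mbm_kernel H t u - mbm_kernel H s u))\<^sup>2) \<partial>lborel)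
      \<le> (\<integral>\<^sup>+u. (ennreal (g u) + ennreal (g (-u))) \<partial>lborel)"
    by (intro nn_integral_mono pw)
  also have "\<dots> = (\<integral>\<^sup>+u. ennreal (g u) \<partial>lborel) + (\<integral>\<^sup>+u. ennreal (g (-u)) \<partial>lborel)"
    by (intro nn_integral_add) auto
  also have "\<dots> = ennreal (2 * W)" using nn nn' W0 by (simp add: ennreal_plus[symmetric] del: ennreal_plus)
  finally have "(\<integral>u. (cmod (mbm_kernel H t u - mbm_kernel H s u))\<^sup>2 \<partial>lborel) \<le> 2 * W"
    using W0 by (intro integral_real_bounded) auto
  also have "2 * W \<le> 4 * ((t-s) powr (2 * H t) * (1/(2-2*h2) + 2/h1))
       + 4 * (H t - H s)\<^sup>2 * (C2 h1 h2 * (S powr (2*h2) * ((ln S)\<^sup>2 + 1)))"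
  proof -
    have c1: "1/(2-2*H t) + 2/H t \<le> 1/(2-2*h2) + 2/h1"
      using A h by (intro add_mono divide_left_mono mult_pos_pos) auto
    define a where "a = d powr (2 * H t) * (1/(2-2*H t) + 2/H t)"
    define a' where "a' = d powr (2 * H t) * (1/(2-2*h2) + 2/h1)"
    define b where "b = (H t - H s)\<^sup>2 * V"
    define b' where "b' = (H t - H s)\<^sup>2 * (C2 h1 h2 * (S powr (2*h2) * ((ln S)\<^sup>2 + 1)))"
    have "a \<le> a'" unfolding a_def a'_def using c1 by (intro mult_left_mono) auto
    moreover have "b \<le> b'" unfolding b_def b'_def using Vb by (intro mult_left_mono) auto
    moreover have "W = 2 * a + 2 * b" unfolding W_def a_def b_def by (simp add: mult.assoc)
    moreover have "4 * ((t-s) powr (2 * H t) * (1/(2-2*h2) + 2/h1))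
       + 4 * (H t - H s)\<^sup>2 * (C2 h1 h2 * (S powr (2*h2) * ((ln S)\<^sup>2 + 1))) = 4 * a' + 4 * b'"
      unfolding a'_def b'_def d_def by (simp add: mult.assoc)
    ultimately show ?thesis by linarith
  qed
  finally show ?thesis .
qed



lemma C2_pos: "0 < h1 \<Longrightarrow> h1 < h2 \<Longrightarrow> h2 < 1 \<Longrightarrow> C2 h1 h2 > 0"
  unfolding C2_def by (intro add_pos_pos) auto

theorem lemma1:
  fixes M :: "'a measure" and Y :: "real \<Rightarrow> 'a \<Rightarrow> real"
    and H :: "real \<Rightarrow> real" and h1 h2 c :: real
  assumes "continuous_on {0..} H"
    and "0 < h1" "h1 < h2" "h2 < 1"
    and "\<And>t. t \<ge> 0 \<Longrightarrow> h1 \<le> H t \<and> H t \<le> h2"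
    and "is_harmonizable_mbm M Y H c"
  shows "\<exists>K2>0. \<forall>t s. 0 \<le> s \<longrightarrow> s \<le> t \<longrightarrow>
           (\<integral>\<omega>. (Y t \<omega> - Y s \<omega>)\<^sup>2 \<partial>M)
             \<le> K2 * \<bar>t - s\<bar> powr (2 * H t) + K2 * (H t - H s)\<^sup>2 * (zfun h2 s)\<^sup>2"
proof -
  have h: "0 < h1" "h1 < h2" "h2 < 1" using assms(2-4) .
  have c: "c > 0" and E: "\<And>t s. t \<ge> 0 \<Longrightarrow> s \<ge> 0 \<Longrightarrow> (\<integral>\<omega>. (Y t \<omega> - Y s \<omega>)\<^sup>2 \<partial>M) =
          c * (\<integral>u. (cmod (mbm_kernel H t u - mbm_kernel H s u))\<^sup>2 \<partial>lborel)"
    using assms(6) unfolding is_harmonizable_mbm_def by auto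
  define C1 where "C1 = 1/(2-2*h2) + 2/h1"
  have C1: "C1 > 0" unfolding C1_def using h by (intro add_pos_pos) auto
  have C2: "C2 h1 h2 > 0" using C2_pos[OF h] .
  define K where "K = 4 * c * (C1 + C2 h1 h2)"
  have K: "K > 0" unfolding K_def using c C1 C2 by auto
  have "\<forall>t s. 0 \<le> s \<longrightarrow> s \<le> t \<longrightarrow>
           (\<integral>\<omega>. (Y t \<omega> - Y s \<omega>)\<^sup>2 \<partial>M)
             \<le> K * \<bar>t - s\<bar> powr (2 * H t) + K * (H t - H s)\<^sup>2 * (zfun h2 s)\<^sup>2"
  proof (intro allI impI)
    fix t s :: real
    assume s: "0 \<le> s" and st: "s \<le> t"
    have R0: "0 \<le> K * \<bar>t - s\<bar> powr (2 * H t) + K * (H t - H s)\<^sup>2 * (zfun h2 s)\<^sup>2"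
      using K by (intro add_nonneg_nonneg mult_nonneg_nonneg) auto
    show "(\<integral>\<omega>. (Y t \<omega> - Y s \<omega>)\<^sup>2 \<partial>M)
             \<le> K * \<bar>t - s\<bar> powr (2 * H t) + K * (H t - H s)\<^sup>2 * (zfun h2 s)\<^sup>2"
    proof (cases "s = t")
      case True
      then show ?thesis using E[of t t] s R0 by simp
    next
      case False
      then have st': "s < t" using st by simp
      have At: "h1 \<le> H t" "H t \<le> h2" using assms(5)[of t] s st by auto
      have As: "h1 \<le> H s" "H s \<le> h2" using assms(5)[of s] s by auto
      define S where "S = max s 1"
      define Z where "Z = S powr (2*h2) * ((ln S)\<^sup>2 + 1)"
      have Z: "(zfun h2 s)\<^sup>2 = Z" unfolding Z_def S_def by (rule zfun_sq)
      have Z0: "Z \<ge> 0" unfolding Z_def by simp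
      have I: "(\<integral>u. (cmod (mbm_kernel H t u - mbm_kernel H s u))\<^sup>2 \<partial>lborel)
         \<le> 4 * ((t-s) powr (2 * H t) * C1) + 4 * (H t - H s)\<^sup>2 * (C2 h1 h2 * Z)"
        using kernel_int[OF h At As s st' S_def] unfolding C1_def Z_def .
      define a where "a = (t-s) powr (2 * H t)"
      define b where "b = (H t - H s)\<^sup>2 * Z"
      have a0: "a \<ge> 0" and b0: "b \<ge> 0" unfolding a_def b_def using Z0 by auto
      have "(\<integral>\<omega>. (Y t \<omega> - Y s \<omega>)\<^sup>2 \<partial>M) \<le> c * (4 * (a * C1) + 4 * (C2 h1 h2 * b))"
        using E[of t s] s st I c unfolding a_def b_def by (simp add: mult.assoc mult.left_commute)
      also have "\<dots> = 4 * c * C1 * a + 4 * c * C2 h1 h2 * b" by (simp add: algebra_simps)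
      also have "\<dots> \<le> K * a + K * b"
        unfolding K_def using a0 b0 c C1 C2
        by (intro add_mono mult_right_mono) (auto simp: algebra_simps)
      also have "K * a + K * b = K * \<bar>t - s\<bar> powr (2 * H t) + K * (H t - H s)\<^sup>2 * (zfun h2 s)\<^sup>2"
        unfolding a_def b_def Z using st by (simp add: mult.assoc)
      finally show ?thesis .
    qed
  qed
  then show ?thesis using K by blast
qed

end
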